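(* Assume $|\mathbb O|\ge 2$. The following are equivalent: (1) for every initial state $x(0)\in\mathbb O^n$, the trajectory $x(t)$ of the PID opinion dynamics almost surely converges to a consensus state (all coordinates equal) in finite time; (2) the only non-empty strictly cohesive subset of $\mathcal V$ is $\mathcal V$ itself.
   Context: Let $n\ge 1$, $\mathcal V=\{1,\dots,n\}$, and let $W=(w_{ij})$ be an $n\times n$ row-stochastic matrix (nonnegative entries, each row summing to $1$). The opinion set is a finite set of consecutive integers $\mathbb O=\{k,k+1,\dots,k+s\}$, and $\theta\in\mathbb O$ is a fixed "truth". For $x\in\mathbb O^n$, $i\in\mathcal V$, $z\in\mathbb O$, define $C^i_{\mathrm{social}}(z;x)=\sum_{j=1}^n w_{ij}|z-x_j|$ and $C^i_{\mathrm{cog}}(z)=|z-\theta|$, and $P_i(x)=\{z\in\mathbb O: C^i_{\mathrm{social}}(z;x)\le C^i_{\mathrm{social}}(x_i;x),\ |z-\theta|\le |x_i-\theta|\}$. PID opinion dynamics: starting from $x(0)$, at each time $t+1$ a node $i$ is chosen uniformly at random from $\mathcal V$ and sets $x_i(t+1)$ to an element chosen at random from $P_i(x(t))$, each element having positive probability; all other nodes keep their opinions. A set $\mathcal M\subseteq\mathcal V$ is strictly cohesive if $\sum_{j\in\mathcal M}w_{ij}>\tfrac12$ for every $i\in\mathcal M$. *)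

theory Defs
  imports "HOL-Probability.Probability"
begin

text \<open>Nodes are 1..n; a state is a function nat => int (only entries on 1..n matter).
  The opinion set is the integer interval {k..k+s}; W is given as nat => nat => real.\<close>

definition row_stochastic :: "nat \<Rightarrow> (nat \<Rightarrow> nat \<Rightarrow> real) \<Rightarrow> bool" where
  "row_stochastic n W \<longleftrightarrow>
     (\<forall>i\<in>{1..n}. \<forall>j\<in>{1..n}. 0 \<le> W i j) \<and> (\<forall>i\<in>{1..n}. (\<Sum>j\<in>{1..n}. W i j) = 1)"

definition C_social :: "nat \<Rightarrow> (nat \<Rightarrow> nat \<Rightarrow> real) \<Rightarrow> nat \<Rightarrow> int \<Rightarrow> (nat \<Rightarrow> int) \<Rightarrow> real" where
  "C_social n W i z x = (\<Sum>j\<in>{1..n}. W i j * real_of_int \<bar>z - x j\<bar>)"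

definition C_cog :: "int \<Rightarrow> int \<Rightarrow> int" where
  "C_cog \<theta> z = \<bar>z - \<theta>\<bar>"

definition P_set :: "nat \<Rightarrow> (nat \<Rightarrow> nat \<Rightarrow> real) \<Rightarrow> int set \<Rightarrow> int \<Rightarrow> nat \<Rightarrow> (nat \<Rightarrow> int) \<Rightarrow> int set" where
  "P_set n W Op \<theta> i x =
     {z \<in> Op. C_social n W i z x \<le> C_social n W i (x i) x \<and> C_cog \<theta> z \<le> C_cog \<theta> (x i)}"

definition strictly_cohesive :: "nat \<Rightarrow> (nat \<Rightarrow> nat \<Rightarrow> real) \<Rightarrow> nat set \<Rightarrow> bool" where
  "strictly_cohesive n W M \<longleftrightarrow> M \<subseteq> {1..n} \<and> (\<forall>i\<in>M. (\<Sum>j\<in>M. W i j) > 1/2)"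

text \<open>The randomness of one update step is a sample r from a (countably supported)
  distribution N; node r is the activated node and sel r x the new opinion it adopts
  when the current state is x.\<close>

definition valid_PID_rand ::
  "nat \<Rightarrow> (nat \<Rightarrow> nat \<Rightarrow> real) \<Rightarrow> int set \<Rightarrow> int \<Rightarrow> 'r pmf \<Rightarrow> ('r \<Rightarrow> nat)
     \<Rightarrow> ('r \<Rightarrow> (nat \<Rightarrow> int) \<Rightarrow> int) \<Rightarrow> bool" where
  "valid_PID_rand n W Op \<theta> N node sel \<longleftrightarrow>
     (\<forall>r\<in>set_pmf N. node r \<in> {1..n}) \<and>
     (\<forall>i\<in>{1..n}. measure_pmf.prob N {r. node r = i} = 1 / real n) \<and>
     (\<forall>x. (\<forall>j\<in>{1..n}. x j \<in> Op) \<longrightarrow>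
        (\<forall>r\<in>set_pmf N. sel r x \<in> P_set n W Op \<theta> (node r) x) \<and>
        (\<forall>i\<in>{1..n}. \<forall>z\<in>P_set n W Op \<theta> i x.
            measure_pmf.prob N {r. node r = i \<and> sel r x = z} > 0))"

primrec traj :: "('r \<Rightarrow> nat) \<Rightarrow> ('r \<Rightarrow> (nat \<Rightarrow> int) \<Rightarrow> int) \<Rightarrow> (nat \<Rightarrow> int)
                   \<Rightarrow> (nat \<Rightarrow> 'r) \<Rightarrow> nat \<Rightarrow> (nat \<Rightarrow> int)" where
  "traj node sel x0 \<omega> 0 = x0"
| "traj node sel x0 \<omega> (Suc t) =
     (let x = traj node sel x0 \<omega> t in x(node (\<omega> t) := sel (\<omega> t) x))"

end

theory Submission
  imports Defs
begin


definition stp :: "('r \<Rightarrow> nat) \<Rightarrow> ('r \<Rightarrow> (nat \<Rightarrow> int) \<Rightarrow> int) \<Rightarrow> 'r \<Rightarrow> (nat \<Rightarrow> int) \<Rightarrow> (nat \<Rightarrow> int)" where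
  "stp node sel r x = x(node r := sel r x)"

definition run :: "('r \<Rightarrow> nat) \<Rightarrow> ('r \<Rightarrow> (nat \<Rightarrow> int) \<Rightarrow> int) \<Rightarrow> 'r list \<Rightarrow> (nat \<Rightarrow> int) \<Rightarrow> (nat \<Rightarrow> int)" where
  "run node sel u x = foldl (\<lambda>x r. stp node sel r x) x u"

definition cons_st :: "nat \<Rightarrow> (nat \<Rightarrow> int) \<Rightarrow> bool" where
  "cons_st n x \<longleftrightarrow> (\<exists>c. \<forall>j\<in>{1..n}. x j = c)"

definition vst :: "nat \<Rightarrow> int set \<Rightarrow> (nat \<Rightarrow> int) \<Rightarrow> bool" where
  "vst n Op x \<longleftrightarrow> (\<forall>j\<in>{1..n}. x j \<in> Op)"

lemma run_Nil[simp]: "run node sel [] x = x"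
  by (simp add: run_def)

lemma run_Cons[simp]: "run node sel (r # u) x = run node sel u (stp node sel r x)"
  by (simp add: run_def)

lemma run_append: "run node sel (u @ v) x = run node sel v (run node sel u x)"
  by (simp add: run_def)

lemma traj_shift:
  "traj node sel x0 \<omega> (t + i) = run node sel (map (\<lambda>j. \<omega> (t + j)) [0..<i]) (traj node sel x0 \<omega> t)"
  by (induction i) (simp_all add: run_append stp_def Let_def)

lemma cost_step:
  assumes rs: "row_stochastic n W" and i: "i \<in> {1..n}" and M: "M \<subseteq> {1..n}"
    and d: "\<And>j. j \<in> {1..n} \<Longrightarrow> \<bar>z - x j\<bar> - \<bar>y - x j\<bar> = (if j \<in> M then 1 else -1)"
    and w: "(\<Sum>j\<in>M. W i j) \<le> 1/2"
  shows "C_social n W i z x \<le> C_social n W i y x"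
proof -
  have h: "(\<Sum>j\<in>{1..n}. if j \<in> M then W i j else 0) = (\<Sum>j\<in>M. W i j)"
    using M by (subst sum.inter_restrict[symmetric]) (auto simp: Int_absorb1)
  have "C_social n W i z x = (\<Sum>j\<in>{1..n}. W i j * real_of_int \<bar>y - x j\<bar> + W i j * (if j \<in> M then 1 else -1))"
    unfolding C_social_def
  proof (rule sum.cong)
    fix j assume j: "j \<in> {1..n}"
    have e: "\<bar>z - x j\<bar> = \<bar>y - x j\<bar> + (if j \<in> M then 1 else -1)" using d[OF j] by simp
    have "real_of_int \<bar>z - x j\<bar> = real_of_int (\<bar>y - x j\<bar> + (if j \<in> M then 1 else -1))"
      using e by (simp only:)
    then have "real_of_int \<bar>z - x j\<bar> = real_of_int \<bar>y - x j\<bar> + (if j \<in> M then 1 else -1)"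
      by (cases "j \<in> M") simp_all
    then show "W i j * real_of_int \<bar>z - x j\<bar> = W i j * real_of_int \<bar>y - x j\<bar> + W i j * (if j \<in> M then 1 else -1)"
      by (simp add: algebra_simps)
  qed simp
  also have "\<dots> = C_social n W i y x + (\<Sum>j\<in>{1..n}. W i j * (if j \<in> M then 1 else -1))"
    by (simp add: sum.distrib C_social_def)
  also have "(\<Sum>j\<in>{1..n}. W i j * (if j \<in> M then 1 else -1)) = (\<Sum>j\<in>{1..n}. 2 * (if j \<in> M then W i j else 0) - W i j)"
    by (rule sum.cong) auto
  also have "\<dots> = 2 * (\<Sum>j\<in>M. W i j) - 1"
    using rs i M h by (simp add: sum_subtractf sum_distrib_left[symmetric] sum.inter_restrict Int_absorb1 row_stochastic_def)
  finally show ?thesis using w by simp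
qed

lemma move:
  assumes rs: "row_stochastic n W" and th: "\<theta> \<in> {k..k + int s}"
    and coh: "\<forall>M. M \<noteq> {} \<and> strictly_cohesive n W M \<longrightarrow> M = {1..n}"
    and v: "vst n {k..k + int s} x" and nc: "\<not> cons_st n x"
  shows "\<exists>i\<in>{1..n}. \<exists>z\<in>P_set n W {k..k + int s} \<theta> i x. \<bar>z - \<theta>\<bar> < \<bar>x i - \<theta>\<bar>"
proof -
  let ?X = "x ` {1..n}"
  have fin: "finite ?X" by simp
  have ne: "{1..n} \<noteq> {}" using nc by (auto simp: cons_st_def)
  then have neX: "?X \<noteq> {}" by simp
  have notcoh: "\<exists>i\<in>M. (\<Sum>j\<in>M. W i j) \<le> 1/2" if "M \<noteq> {}" "M \<subseteq> {1..n}" "M \<noteq> {1..n}" for M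
    proof -
    have "\<not> strictly_cohesive n W M" using coh that by blast
    then show ?thesis using that by (auto simp: strictly_cohesive_def not_less)
  qed
  show ?thesis
  proof (cases "\<exists>j\<in>{1..n}. x j > \<theta>")
    case True
    define m where "m = Max ?X"
    have mge: "x j \<le> m" if "j \<in> {1..n}" for j using fin that by (simp add: m_def)
    have min: "m \<in> ?X" using fin neX by (simp add: m_def)
    have mth: "m > \<theta>" using True mge by force
    define M where "M = {j\<in>{1..n}. x j = m}"
    have "M \<noteq> {}" using min by (auto simp: M_def)
    moreover have "M \<subseteq> {1..n}" by (auto simp: M_def)
    moreover have "M \<noteq> {1..n}" using nc by (auto simp: M_def cons_st_def)
    ultimately obtain i where iM: "i \<in> M" and w: "(\<Sum>j\<in>M. W i j) \<le> 1/2" using notcoh by blast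
    have i: "i \<in> {1..n}" and xi: "x i = m" using iM by (auto simp: M_def)
    have d: "\<bar>m - 1 - x j\<bar> - \<bar>x i - x j\<bar> = (if j \<in> M then 1 else -1)" if j: "j \<in> {1..n}" for j
    proof -
      have "x j \<le> m" using mge[OF j] by simp
      then show ?thesis using j by (cases "x j = m") (auto simp: M_def xi)
    qed
    have "C_social n W i (m - 1) x \<le> C_social n W i (x i) x"
      by (rule cost_step[OF rs i \<open>M \<subseteq> {1..n}\<close> d w])
    moreover have "m - 1 \<in> {k..k + int s}" using th mth min v by (auto simp: vst_def)
    moreover have "\<bar>m - 1 - \<theta>\<bar> < \<bar>x i - \<theta>\<bar>" using xi mth by simp
    ultimately have "m - 1 \<in> P_set n W {k..k + int s} \<theta> i x \<and> \<bar>m - 1 - \<theta>\<bar> < \<bar>x i - \<theta>\<bar>"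
      unfolding P_set_def C_cog_def by simp
    then show ?thesis using i by blast
  next
    case False
    then have le: "x j \<le> \<theta>" if "j \<in> {1..n}" for j using that by force
    have "\<exists>j\<in>{1..n}. x j < \<theta>"
    proof (rule ccontr)
      assume "\<not> ?thesis"
      then have "\<forall>j\<in>{1..n}. x j = \<theta>" using le by force
      then show False using nc by (auto simp: cons_st_def)
    qed
    define m where "m = Min ?X"
    have mge: "m \<le> x j" if "j \<in> {1..n}" for j using fin that by (simp add: m_def)
    have min: "m \<in> ?X" using fin neX by (simp add: m_def)
    have mth: "m < \<theta>" using \<open>\<exists>j\<in>{1..n}. x j < \<theta>\<close> mge by force
    define M where "M = {j\<in>{1..n}. x j = m}"
    have "M \<noteq> {}" using min by (auto simp: M_def)
    moreover have "M \<subseteq> {1..n}" by (auto simp: M_def)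
    moreover have "M \<noteq> {1..n}" using nc by (auto simp: M_def cons_st_def)
    ultimately obtain i where iM: "i \<in> M" and w: "(\<Sum>j\<in>M. W i j) \<le> 1/2" using notcoh by blast
    have i: "i \<in> {1..n}" and xi: "x i = m" using iM by (auto simp: M_def)
    have d: "\<bar>m + 1 - x j\<bar> - \<bar>x i - x j\<bar> = (if j \<in> M then 1 else -1)" if j: "j \<in> {1..n}" for j
    proof -
      have "x j \<ge> m" using mge[OF j] by simp
      then show ?thesis using j by (cases "x j = m") (auto simp: M_def xi)
    qed
    have "C_social n W i (m + 1) x \<le> C_social n W i (x i) x"
      by (rule cost_step[OF rs i \<open>M \<subseteq> {1..n}\<close> d w])
    moreover have "m + 1 \<in> {k..k + int s}" using th mth min v by (auto simp: vst_def)
    moreover have "\<bar>m + 1 - \<theta>\<bar> < \<bar>x i - \<theta>\<bar>" using xi mth by simp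
    ultimately have "m + 1 \<in> P_set n W {k..k + int s} \<theta> i x \<and> \<bar>m + 1 - \<theta>\<bar> < \<bar>x i - \<theta>\<bar>"
      unfolding P_set_def C_cog_def by simp
    then show ?thesis using i by blast
  qed
qed


lemma stp_props:
  assumes vp: "valid_PID_rand n W Op \<theta> N node sel" and r: "r \<in> set_pmf N" and v: "vst n Op x"
  shows "vst n Op (stp node sel r x)" "\<And>j. j \<notin> {1..n} \<Longrightarrow> stp node sel r x j = x j"
    "sel r x \<in> P_set n W Op \<theta> (node r) x" "node r \<in> {1..n}"
proof -
  have nr: "node r \<in> {1..n}" using vp r by (simp add: valid_PID_rand_def)
  have sp: "sel r x \<in> P_set n W Op \<theta> (node r) x" using vp r v by (simp add: valid_PID_rand_def vst_def)
  then have "sel r x \<in> Op" by (simp add: P_set_def)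
  then show "vst n Op (stp node sel r x)" using v by (simp add: vst_def stp_def)
  show "\<And>j. j \<notin> {1..n} \<Longrightarrow> stp node sel r x j = x j" using nr by (auto simp: stp_def)
  show "sel r x \<in> P_set n W Op \<theta> (node r) x" by (rule sp)
  show "node r \<in> {1..n}" by (rule nr)
qed

lemma cons_fix:
  assumes rs: "row_stochastic n W" and vp: "valid_PID_rand n W Op \<theta> N node sel" and r: "r \<in> set_pmf N"
    and v: "vst n Op x" and c: "cons_st n x"
  shows "stp node sel r x = x"
proof -
  obtain c where c: "\<And>j. j \<in> {1..n} \<Longrightarrow> x j = c" using c by (auto simp: cons_st_def)
  define i where "i = node r"
  define z where "z = sel r x"
  have i: "i \<in> {1..n}" and zP: "z \<in> P_set n W Op \<theta> i x"
    using stp_props[OF vp r v] by (simp_all add: i_def z_def)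
  have xi: "x i = c" using c i by simp
  have "C_social n W i (x i) x = 0" unfolding C_social_def using c xi by simp
  moreover have "C_social n W i z x = real_of_int \<bar>z - c\<bar>"
    unfolding C_social_def using c rs i
    by (simp add: sum_distrib_right[symmetric] row_stochastic_def)
  ultimately have "real_of_int \<bar>z - c\<bar> \<le> 0" using zP by (simp add: P_set_def)
  then have "z = x i" using xi by simp
  then show ?thesis by (simp add: stp_def i_def z_def)
qed

lemma run_props:
  assumes vp: "valid_PID_rand n W Op \<theta> N node sel"
  shows "set u \<subseteq> set_pmf N \<Longrightarrow> vst n Op x \<Longrightarrow> vst n Op (run node sel u x) \<and> (\<forall>j. j \<notin> {1..n} \<longrightarrow> run node sel u x j = x j)"
proof (induction u arbitrary: x)
  case Nil then show ?case by simp
next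
  case (Cons r u)
  then have r: "r \<in> set_pmf N" and u: "set u \<subseteq> set_pmf N" by auto
  from Cons.IH[OF u stp_props(1)[OF vp r Cons.prems(2)]] stp_props(2)[OF vp r Cons.prems(2)]
  show ?case by simp
qed

lemma run_cons:
  assumes rs: "row_stochastic n W" and vp: "valid_PID_rand n W Op \<theta> N node sel"
  shows "set u \<subseteq> set_pmf N \<Longrightarrow> vst n Op x \<Longrightarrow> cons_st n x \<Longrightarrow> run node sel u x = x"
proof (induction u)
  case Nil then show ?case by simp
next
  case (Cons r u)
  then show ?case using cons_fix[OF rs vp, of r x] by simp
qed

lemma reach_one:
  assumes rs: "row_stochastic n W" and th: "\<theta> \<in> {k..k + int s}"
    and vp: "valid_PID_rand n W {k..k + int s} \<theta> N node sel"
    and coh: "\<forall>M. M \<noteq> {} \<and> strictly_cohesive n W M \<longrightarrow> M = {1..n}"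
  shows "vst n {k..k + int s} x \<Longrightarrow> \<exists>u. set u \<subseteq> set_pmf N \<and> cons_st n (run node sel u x)"
proof (induction x rule: measure_induct_rule[where f = "\<lambda>x. \<Sum>j\<in>{1..n}. nat \<bar>x j - \<theta>\<bar>"])
  case (less x)
  show ?case
  proof (cases "cons_st n x")
    case True
    then show ?thesis by (intro exI[of _ "[]"]) simp
  next
    case False
    obtain i z where i: "i \<in> {1..n}" and zP: "z \<in> P_set n W {k..k + int s} \<theta> i x"
      and lt: "\<bar>z - \<theta>\<bar> < \<bar>x i - \<theta>\<bar>"
      using move[OF rs th coh less.prems False] by blast
    have "measure_pmf.prob N {r. node r = i \<and> sel r x = z} > 0"
      using vp less.prems i zP by (simp add: valid_PID_rand_def vst_def)
    then obtain r where r: "r \<in> set_pmf N" and nr: "node r = i" and sr: "sel r x = z"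
      using measure_pmf_zero_iff[of N "{r. node r = i \<and> sel r x = z}"] by force
    define x' where "x' = stp node sel r x"
    have x': "x' = x(i := z)" by (simp add: x'_def stp_def nr sr)
    have v': "vst n {k..k + int s} x'" using stp_props(1)[OF vp r less.prems] by (simp add: x'_def)
    have "(\<Sum>j\<in>{1..n}. nat \<bar>x' j - \<theta>\<bar>) = nat \<bar>z - \<theta>\<bar> + (\<Sum>j\<in>{1..n} - {i}. nat \<bar>x j - \<theta>\<bar>)"
    proof -
      have "(\<Sum>j\<in>{1..n} - {i}. nat \<bar>x' j - \<theta>\<bar>) = (\<Sum>j\<in>{1..n} - {i}. nat \<bar>x j - \<theta>\<bar>)"
        by (rule sum.cong) (auto simp: x')
      moreover have "(\<Sum>j\<in>{1..n}. nat \<bar>x' j - \<theta>\<bar>) = nat \<bar>x' i - \<theta>\<bar> + (\<Sum>j\<in>{1..n} - {i}. nat \<bar>x' j - \<theta>\<bar>)"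
        using i by (intro sum.remove) auto
      ultimately show ?thesis by (simp add: x')
    qed
    also have "\<dots> < nat \<bar>x i - \<theta>\<bar> + (\<Sum>j\<in>{1..n} - {i}. nat \<bar>x j - \<theta>\<bar>)"
      using lt by simp
    also have "\<dots> = (\<Sum>j\<in>{1..n}. nat \<bar>x j - \<theta>\<bar>)"
      using i by (intro sum.remove[symmetric]) auto
    finally obtain u where u: "set u \<subseteq> set_pmf N" "cons_st n (run node sel u x')"
      using less.IH[OF _ v'] by blast
    show ?thesis using u r by (intro exI[of _ "r # u"]) (simp add: x'_def)
  qed
qed

lemma reach_all:
  assumes rs: "row_stochastic n W" and th: "\<theta> \<in> {k..k + int s}"
    and vp: "valid_PID_rand n W {k..k + int s} \<theta> N node sel"
    and coh: "\<forall>M. M \<noteq> {} \<and> strictly_cohesive n W M \<longrightarrow> M = {1..n}"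
  shows "finite S \<Longrightarrow> (\<forall>x\<in>S. vst n {k..k + int s} x) \<Longrightarrow> \<exists>u. set u \<subseteq> set_pmf N \<and> (\<forall>x\<in>S. cons_st n (run node sel u x))"
proof (induction S rule: finite_induct)
  case empty then show ?case by (intro exI[of _ "[]"]) simp
next
  case (insert x S)
  obtain u where u: "set u \<subseteq> set_pmf N" "\<forall>y\<in>S. cons_st n (run node sel u y)" using insert by auto
  have vx: "vst n {k..k + int s} (run node sel u x)" using run_props[OF vp u(1)] insert.prems by auto
  obtain v where v: "set v \<subseteq> set_pmf N" "cons_st n (run node sel v (run node sel u x))"
    using reach_one[OF rs th vp coh vx] by blast
  have "cons_st n (run node sel (u @ v) y)" if y: "y \<in> S" for y
  proof -
    have vy: "vst n {k..k + int s} (run node sel u y)" using run_props[OF vp u(1)] insert.prems y by auto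
    show ?thesis using run_cons[OF rs vp v(1) vy] u(2) y by (simp add: run_append)
  qed
  then show ?case using u v by (intro exI[of _ "u @ v"]) (auto simp: run_append)
qed



lemma AE_support:
  fixes N :: "'r pmf"
  shows "AE \<omega> in (\<Pi>\<^sub>M t\<in>(UNIV::nat set). measure_pmf N). \<forall>t. \<omega> t \<in> set_pmf N"
proof -
  have "AE \<omega> in (\<Pi>\<^sub>M t\<in>(UNIV::nat set). measure_pmf N). \<omega> t \<in> set_pmf N" for t
    by (rule AE_PiM_component) (auto intro: prob_space_measure_pmf AE_measure_pmf)
  then show ?thesis by (simp add: AE_all_countable)
qed

lemma indep_coords:
  fixes N :: "'r pmf"
  defines "P \<equiv> (\<Pi>\<^sub>M t\<in>(UNIV::nat set). measure_pmf N)"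
  shows "prob_space.indep_vars P (\<lambda>_. measure_pmf N) (\<lambda>i \<omega>. \<omega> i) UNIV"
proof -
  interpret P: prob_space P unfolding P_def by (rule prob_space_PiM) (rule prob_space_measure_pmf)
  show ?thesis
  proof (subst P.indep_vars_iff_distr_eq_PiM)
    show "(\<lambda>\<omega>. \<omega> i) \<in> measurable P (measure_pmf N)" for i
      unfolding P_def by (rule measurable_component_singleton) simp
    have "distr P (\<Pi>\<^sub>M i\<in>UNIV. measure_pmf N) (\<lambda>x. \<lambda>i\<in>UNIV. x i) = P"
      by (simp add: restrict_UNIV P_def)
    moreover have "(\<Pi>\<^sub>M i\<in>UNIV. distr P (measure_pmf N) (\<lambda>\<omega>. \<omega> i)) = P"
      unfolding P_def by (subst distr_PiM_component) (auto intro: prob_space_measure_pmf)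
    ultimately show "distr P (\<Pi>\<^sub>M i\<in>UNIV. measure_pmf N) (\<lambda>x. \<lambda>i\<in>UNIV. x i) =
      (\<Pi>\<^sub>M i\<in>UNIV. distr P (measure_pmf N) (\<lambda>\<omega>. \<omega> i))" by simp
  qed simp
qed


lemma block_AE:
  fixes N :: "'r pmf" and u :: "'r list"
  assumes uN: "set u \<subseteq> set_pmf N" and une: "u \<noteq> []"
  shows "AE \<omega> in (\<Pi>\<^sub>M t\<in>(UNIV::nat set). measure_pmf N). \<exists>m. \<forall>i<length u. \<omega> (m * length u + i) = u ! i"
proof -
  define P where "P = (\<Pi>\<^sub>M t\<in>(UNIV::nat set). measure_pmf N)"
  interpret P: prob_space P unfolding P_def by (rule prob_space_PiM) (rule prob_space_measure_pmf)
  interpret pp: product_prob_space "\<lambda>_::nat. measure_pmf N" UNIV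
    by unfold_locales
  define L where "L = length u"
  define K where "K m = {m * L..<m * L + L}" for m
  define E where "E m = {\<omega> \<in> space P. \<forall>i\<in>K m. \<omega> i \<in> {u ! (i - m * L)}}" for m
  define q where "q = (\<Prod>i<L. pmf N (u ! i))"
  have spP: "space P = UNIV" by (simp add: P_def space_PiM)
  have Esets: "E m \<in> sets P" for m
    unfolding E_def by (intro sets.sets_Collect_finite_All) (auto simp: P_def K_def)
  have EL: "\<omega> \<in> E m \<longleftrightarrow> (\<forall>i<L. \<omega> (m * L + i) = u ! i)" for \<omega> m
  proof -
    have "(\<forall>i\<in>K m. \<omega> i = u ! (i - m * L)) \<longleftrightarrow> (\<forall>i<L. \<omega> (m * L + i) = u ! i)"
      unfolding K_def
    proof safe
      fix i assume "\<forall>i\<in>{m * L..<m * L + L}. \<omega> i = u ! (i - m * L)" "i < L"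
      then show "\<omega> (m * L + i) = u ! i" by (metis add.commute add_diff_cancel_right' atLeastLessThan_iff le_add2 nat_add_left_cancel_less)
    next
      fix i assume "\<forall>i<L. \<omega> (m * L + i) = u ! i" "i \<in> {m * L..<m * L + L}"
      then show "\<omega> i = u ! (i - m * L)"
        by (metis atLeastLessThan_iff le_add_diff_inverse less_diff_conv2 add.commute)
    qed
    then show ?thesis by (simp add: E_def spP)
  qed
  have probE: "measure P (E m) = q" for m
  proof -
    have "emeasure P (E m) = (\<Prod>i\<in>K m. emeasure (measure_pmf N) {u ! (i - m * L)})"
      unfolding E_def P_def by (rule pp.emeasure_PiM_Collect) (auto simp: K_def)
    also have "\<dots> = ennreal (\<Prod>i\<in>K m. pmf N (u ! (i - m * L)))"
      by (simp add: emeasure_pmf_single prod_ennreal pmf_nonneg)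
    finally have "measure P (E m) = (\<Prod>i\<in>K m. pmf N (u ! (i - m * L)))"
      by (simp add: P.emeasure_eq_measure prod_nonneg pmf_nonneg)
    also have "\<dots> = (\<Prod>i\<in>{0 + m * L..<L + m * L}. pmf N (u ! (i - m * L)))"
      by (simp add: K_def add.commute)
    also have "\<dots> = q"
      unfolding prod.shift_bounds_nat_ivl q_def by (simp add: atLeast0LessThan)
    finally show ?thesis .
  qed
  have qpos: "q > 0"
    unfolding q_def using uN by (intro prod_pos) (auto simp: pmf_positive L_def intro!: pmf_positive nth_mem)
  have qle: "q \<le> 1" using probE[of 0] P.prob_le_1 by metis
  have disj: "disjoint_family_on K UNIV"
    unfolding disjoint_family_on_def
  proof (intro ballI impI)
    fix m m' :: nat assume "m \<noteq> m'"
    { fix i assume "i \<in> K m" "i \<in> K m'"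
      then have "i div L = m" "i div L = m'" unfolding K_def
        by (auto intro!: div_nat_eqI simp: algebra_simps)
      then have False using \<open>m \<noteq> m'\<close> by simp }
    then show "K m \<inter> K m' = {}" by blast
  qed
  have ind: "P.indep_vars (\<lambda>m. \<Pi>\<^sub>M i\<in>K m. measure_pmf N) (\<lambda>m \<omega>. restrict (\<lambda>i. \<omega> i) (K m)) UNIV"
    using P.indep_vars_restrict[OF indep_coords[of N, folded P_def] _ disj] by simp
  define U where "U m = restrict (\<lambda>i. u ! (i - m * L)) (K m)" for m
  define A where "A m = space (\<Pi>\<^sub>M i\<in>K m. measure_pmf N) - {U m}" for m
  have Asets: "A m \<in> sets (\<Pi>\<^sub>M i\<in>K m. measure_pmf N)" for m
  proof -
    have "{U m} = (\<Pi>\<^sub>E i\<in>K m. {U m i})" by (rule PiE_singleton[symmetric]) (simp add: U_def)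
    also have "\<dots> \<in> sets (\<Pi>\<^sub>M i\<in>K m. measure_pmf N)"
      by (rule sets_PiM_I_finite) (auto simp: K_def)
    finally show ?thesis unfolding A_def by auto
  qed
  have pre: "(\<lambda>\<omega>. restrict \<omega> (K m)) -` A m \<inter> space P = space P - E m" for m
  proof -
    have "restrict \<omega> (K m) = U m \<longleftrightarrow> (\<forall>i\<in>K m. \<omega> i = u ! (i - m * L))" for \<omega> :: "nat \<Rightarrow> 'r"
      unfolding U_def by (auto simp: fun_eq_iff restrict_def)
    then show ?thesis by (auto simp: A_def E_def spP space_PiM)
  qed
  have inter: "measure P (\<Inter>m<Suc M. space P - E m) = (1 - q) ^ Suc M" for M
  proof -
    have "measure P (\<Inter>m\<in>{..<Suc M}. (\<lambda>\<omega>. restrict \<omega> (K m)) -` A m \<inter> space P) =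
      (\<Prod>m\<in>{..<Suc M}. measure P ((\<lambda>\<omega>. restrict \<omega> (K m)) -` A m \<inter> space P))"
      by (rule P.indep_varsD[OF ind]) (auto intro: Asets)
    then show ?thesis using Esets by (simp add: pre P.prob_compl probE)
  qed
  define D where "D = (\<Inter>m. space P - E m)"
  have Dsets: "D \<in> sets P" unfolding D_def using Esets by auto
  have "measure P D \<le> (1 - q) ^ Suc M" for M
  proof -
    have "measure P D \<le> measure P (\<Inter>m<Suc M. space P - E m)"
      using Esets by (intro P.finite_measure_mono) (auto simp: D_def)
    then show ?thesis using inter by simp
  qed
  moreover have "(\<lambda>M. (1 - q) ^ Suc M) \<longlonglongrightarrow> 0"
    using qpos qle by (intro LIMSEQ_Suc LIMSEQ_power_zero) simp
  ultimately have "measure P D \<le> 0"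
    by (intro LIMSEQ_le_const[of "\<lambda>M. (1 - q) ^ Suc M"]) auto
  then have "D \<in> null_sets P" using Dsets
    by (intro null_setsI) (simp add: P.emeasure_eq_measure antisym measure_nonneg)
  moreover have "{\<omega> \<in> space P. \<not> (\<exists>m. \<forall>i<L. \<omega> (m * L + i) = u ! i)} \<subseteq> D"
    by (auto simp: D_def EL spP) blast
  ultimately show ?thesis unfolding P_def[symmetric] L_def[symmetric]
    by (rule AE_I')
qed



lemma cost_lower:
  assumes rs: "row_stochastic n W" and i: "i \<in> {1..n}" and M: "M \<subseteq> {1..n}"
    and xa: "\<And>j. j \<in> M \<Longrightarrow> x j = a" and w: "(\<Sum>j\<in>M. W i j) > 1/2" and za: "z \<noteq> a"
  shows "C_social n W i z x > C_social n W i a x"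
proof -
  have Wn: "\<And>j. j \<in> {1..n} \<Longrightarrow> 0 \<le> W i j" using rs i by (simp add: row_stochastic_def)
  have h: "(\<Sum>j\<in>{1..n}. if j \<in> M then W i j else 0) = (\<Sum>j\<in>M. W i j)"
    using M by (subst sum.inter_restrict[symmetric]) (auto simp: Int_absorb1)
  let ?d = "real_of_int \<bar>z - a\<bar>"
  have A: "C_social n W i z x \<ge> (\<Sum>j\<in>{1..n}. W i j * real_of_int \<bar>a - x j\<bar> + W i j * (if j \<in> M then ?d else - ?d))"
    unfolding C_social_def
  proof (rule sum_mono)
    fix j assume j: "j \<in> {1..n}"
    have "real_of_int \<bar>z - x j\<bar> \<ge> real_of_int \<bar>a - x j\<bar> + (if j \<in> M then ?d else - ?d)"
    proof (cases "j \<in> M")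
      case True then show ?thesis using xa[OF True] by simp
    next
      case False
      have "\<bar>z - x j\<bar> \<ge> \<bar>a - x j\<bar> - \<bar>z - a\<bar>" by linarith
      then show ?thesis using False by simp
    qed
    then have "W i j * real_of_int \<bar>z - x j\<bar> \<ge> W i j * (real_of_int \<bar>a - x j\<bar> + (if j \<in> M then ?d else - ?d))"
      using Wn[OF j] by (intro mult_left_mono)
    then show "W i j * real_of_int \<bar>a - x j\<bar> + W i j * (if j \<in> M then ?d else - ?d) \<le> W i j * real_of_int \<bar>z - x j\<bar>"
      by (simp add: algebra_simps)
  qed
  have B: "(\<Sum>j\<in>{1..n}. W i j * real_of_int \<bar>a - x j\<bar> + W i j * (if j \<in> M then ?d else - ?d)) = C_social n W i a x + (\<Sum>j\<in>{1..n}. W i j * (if j \<in> M then ?d else - ?d))"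
    by (simp add: sum.distrib C_social_def)
  have "(\<Sum>j\<in>{1..n}. W i j * (if j \<in> M then ?d else - ?d)) = ?d * (\<Sum>j\<in>{1..n}. 2 * (if j \<in> M then W i j else 0) - W i j)"
    by (simp add: sum_distrib_left) (rule sum.cong, auto simp: algebra_simps)
  also have "\<dots> = ?d * (2 * (\<Sum>j\<in>M. W i j) - 1)"
    using rs i M h by (simp add: sum_subtractf sum_distrib_left[symmetric] row_stochastic_def)
  finally have "C_social n W i z x \<ge> C_social n W i a x + ?d * (2 * (\<Sum>j\<in>M. W i j) - 1)"
    using A B by simp
  moreover have "?d * (2 * (\<Sum>j\<in>M. W i j) - 1) > 0" using za w by (intro mult_pos_pos) auto
  ultimately show ?thesis by linarith
qed

lemma traj_in:
  assumes vp: "valid_PID_rand n W Op \<theta> N node sel" and om: "\<forall>t. \<omega> t \<in> set_pmf N" and v: "vst n Op x0"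
  shows "vst n Op (traj node sel x0 \<omega> t) \<and> (\<forall>j. j \<notin> {1..n} \<longrightarrow> traj node sel x0 \<omega> t j = x0 j)"
proof -
  have "traj node sel x0 \<omega> (0 + t) = run node sel (map (\<lambda>j. \<omega> (0 + j)) [0..<t]) (traj node sel x0 \<omega> 0)"
    by (rule traj_shift)
  then have e: "traj node sel x0 \<omega> t = run node sel (map \<omega> [0..<t]) x0" by simp
  show ?thesis unfolding e using om by (intro run_props[OF vp _ v]) auto
qed


theorem theorem3:
  fixes n :: nat and W :: "nat \<Rightarrow> nat \<Rightarrow> real" and k :: int and s :: nat and \<theta> :: int
    and N :: "'r pmf" and node :: "'r \<Rightarrow> nat" and sel :: "'r \<Rightarrow> (nat \<Rightarrow> int) \<Rightarrow> int"
  assumes "n \<ge> 1"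
    and "row_stochastic n W"
    and "s \<ge> 1"
    and "\<theta> \<in> {k..k + int s}"
    and "valid_PID_rand n W {k..k + int s} \<theta> N node sel"
  shows "(\<forall>x0. (\<forall>j\<in>{1..n}. x0 j \<in> {k..k + int s}) \<longrightarrow>
            (AE \<omega> in (\<Pi>\<^sub>M t\<in>(UNIV::nat set). measure_pmf N).
               \<exists>T c. \<forall>t\<ge>T. \<forall>j\<in>{1..n}. traj node sel x0 \<omega> t j = c))
         \<longleftrightarrow> (\<forall>M. M \<noteq> {} \<and> strictly_cohesive n W M \<longrightarrow> M = {1..n})"
proof -
  note rs = assms(2) and th = assms(4) and vp = assms(5)
  let ?O = "{k..k + int s}"
  let ?P = "\<Pi>\<^sub>M t\<in>(UNIV::nat set). measure_pmf N"
  interpret P: prob_space ?P by (rule prob_space_PiM) (rule prob_space_measure_pmf)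
  show ?thesis
  proof
    assume H: "\<forall>x0. (\<forall>j\<in>{1..n}. x0 j \<in> ?O) \<longrightarrow>
            (AE \<omega> in ?P. \<exists>T c. \<forall>t\<ge>T. \<forall>j\<in>{1..n}. traj node sel x0 \<omega> t j = c)"
    show "\<forall>M. M \<noteq> {} \<and> strictly_cohesive n W M \<longrightarrow> M = {1..n}"
    proof (intro allI impI, rule ccontr)
      fix M assume MH: "M \<noteq> {} \<and> strictly_cohesive n W M" and MN: "M \<noteq> {1..n}"
      have Msub: "M \<subseteq> {1..n}" and Mw: "\<And>i. i \<in> M \<Longrightarrow> (\<Sum>j\<in>M. W i j) > 1/2"
        using MH by (auto simp: strictly_cohesive_def)
      obtain i0 where i0: "i0 \<in> M" using MH by blast
      obtain j0 where j0: "j0 \<in> {1..n}" "j0 \<notin> M" using Msub MN by blast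
      define a where "a = (if \<theta> = k then k + 1 else k)"
      have aO: "a \<in> ?O" and ath: "a \<noteq> \<theta>" using th assms(3) by (auto simp: a_def)
      define x0 where "x0 = (\<lambda>j. if j \<in> M then a else \<theta>)"
      have v0: "vst n ?O x0" using aO th by (simp add: vst_def x0_def)
      have fix0: "stp node sel r x0 = x0" if r: "r \<in> set_pmf N" for r
      proof -
        define i where "i = node r"
        define z where "z = sel r x0"
        have i: "i \<in> {1..n}" and zP: "z \<in> P_set n W ?O \<theta> i x0"
          using stp_props[OF vp r v0] by (simp_all add: i_def z_def)
        have "z = x0 i"
        proof (cases "i \<in> M")
          case True
          show ?thesis
          proof (rule ccontr)
            assume "z \<noteq> x0 i"
            then have "C_social n W i z x0 > C_social n W i a x0"
              using True by (intro cost_lower[OF rs i Msub _ Mw[OF True]]) (auto simp: x0_def)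
            then show False using zP True by (simp add: P_set_def x0_def)
          qed
        next
          case False
          then show ?thesis using zP by (simp add: P_set_def x0_def C_cog_def)
        qed
        then show ?thesis by (simp add: stp_def i_def z_def)
      qed
      have "AE \<omega> in ?P. \<not> (\<exists>T c. \<forall>t\<ge>T. \<forall>j\<in>{1..n}. traj node sel x0 \<omega> t j = c)"
        using AE_support[of N]
      proof (rule AE_mp, intro AE_I2 impI)
        fix \<omega> :: "nat \<Rightarrow> 'r" assume om: "\<forall>t. \<omega> t \<in> set_pmf N"
        have tc: "traj node sel x0 \<omega> t = x0" for t
          by (induction t) (simp_all add: Let_def fix0[OF om[rule_format], unfolded stp_def])
        show "\<not> (\<exists>T c. \<forall>t\<ge>T. \<forall>j\<in>{1..n}. traj node sel x0 \<omega> t j = c)"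
        proof
          assume "\<exists>T c. \<forall>t\<ge>T. \<forall>j\<in>{1..n}. traj node sel x0 \<omega> t j = c"
          then obtain T c where "\<forall>j\<in>{1..n}. traj node sel x0 \<omega> T j = c" by blast
          then have "x0 i0 = c" "x0 j0 = c" using i0 Msub j0 unfolding tc by auto
          then show False using i0 j0 ath by (simp add: x0_def)
        qed
      qed
      moreover have "AE \<omega> in ?P. \<exists>T c. \<forall>t\<ge>T. \<forall>j\<in>{1..n}. traj node sel x0 \<omega> t j = c"
        using H v0 by (simp add: vst_def)
      ultimately have "AE \<omega> in ?P. False" by eventually_elim auto
      then show False by (simp add: P.AE_False)
    qed
  next
    assume coh: "\<forall>M. M \<noteq> {} \<and> strictly_cohesive n W M \<longrightarrow> M = {1..n}"
    show "\<forall>x0. (\<forall>j\<in>{1..n}. x0 j \<in> ?O) \<longrightarrow>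
            (AE \<omega> in ?P. \<exists>T c. \<forall>t\<ge>T. \<forall>j\<in>{1..n}. traj node sel x0 \<omega> t j = c)"
    proof (intro allI impI)
      fix x0 :: "nat \<Rightarrow> int" assume "\<forall>j\<in>{1..n}. x0 j \<in> ?O"
      then have v0: "vst n ?O x0" by (simp add: vst_def)
      define S where "S = {x. vst n ?O x \<and> (\<forall>j. j \<notin> {1..n} \<longrightarrow> x j = x0 j)}"
      have "S \<subseteq> (\<lambda>f j. if j \<in> {1..n} then f j else x0 j) ` ({1..n} \<rightarrow>\<^sub>E ?O)"
      proof
        fix x assume x: "x \<in> S"
        then have "x = (\<lambda>j. if j \<in> {1..n} then restrict x {1..n} j else x0 j)"
          by (auto simp: S_def fun_eq_iff)
        moreover have "restrict x {1..n} \<in> {1..n} \<rightarrow>\<^sub>E ?O" using x by (auto simp: S_def vst_def)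
        ultimately show "x \<in> (\<lambda>f j. if j \<in> {1..n} then f j else x0 j) ` ({1..n} \<rightarrow>\<^sub>E ?O)" by blast
      qed
      then have finS: "finite S" by (rule finite_subset) (intro finite_imageI finite_PiE, auto)
      obtain u where u: "set u \<subseteq> set_pmf N" "\<forall>x\<in>S. cons_st n (run node sel u x)"
        using reach_all[OF rs th vp coh finS] by (auto simp: S_def)
      obtain r0 where r0: "r0 \<in> set_pmf N" using set_pmf_not_empty[of N] by blast
      define u' where "u' = u @ [r0]"
      have u'N: "set u' \<subseteq> set_pmf N" using u r0 by (simp add: u'_def)
      have u'ne: "u' \<noteq> []" by (simp add: u'_def)
      have u'c: "cons_st n (run node sel u' x)" if "x \<in> S" for x
      proof -
        have "vst n ?O (run node sel u x)" using run_props[OF vp u(1)] that by (auto simp: S_def)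
        then show ?thesis using u(2) that run_cons[OF rs vp, of "[r0]"] r0 by (simp add: u'_def run_append)
      qed
      define L where "L = length u'"
      show "AE \<omega> in ?P. \<exists>T c. \<forall>t\<ge>T. \<forall>j\<in>{1..n}. traj node sel x0 \<omega> t j = c"
        using AE_support[of N] block_AE[OF u'N u'ne]
      proof eventually_elim
        case (elim \<omega>)
        obtain m where m: "\<forall>i<L. \<omega> (m * L + i) = u' ! i" using elim(2) by (auto simp: L_def)
        have tin: "vst n ?O (traj node sel x0 \<omega> t) \<and> (\<forall>j. j \<notin> {1..n} \<longrightarrow> traj node sel x0 \<omega> t j = x0 j)" for t
          by (rule traj_in[OF vp elim(1) v0])
        define y where "y = traj node sel x0 \<omega> (m * L)"
        have yS: "y \<in> S" using tin by (simp add: S_def y_def)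
        have "map (\<lambda>j. \<omega> (m * L + j)) [0..<L] = u'"
          using m by (intro nth_equalityI) (simp_all add: L_def)
        moreover have "traj node sel x0 \<omega> (m * L + L) = run node sel (map (\<lambda>j. \<omega> (m * L + j)) [0..<L]) y"
          unfolding y_def by (rule traj_shift)
        ultimately have zy: "traj node sel x0 \<omega> (m * L + L) = run node sel u' y"
          by simp
        define T where "T = m * L + L"
        have cz: "cons_st n (traj node sel x0 \<omega> T)" using zy u'c[OF yS] by (simp add: T_def)
        then obtain c where c: "\<forall>j\<in>{1..n}. traj node sel x0 \<omega> T j = c" by (auto simp: cons_st_def)
        have stay: "traj node sel x0 \<omega> t = traj node sel x0 \<omega> T" if "t \<ge> T" for t
        proof -
          have "traj node sel x0 \<omega> (T + (t - T)) = run node sel (map (\<lambda>j. \<omega> (T + j)) [0..<t - T]) (traj node sel x0 \<omega> T)"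
            by (rule traj_shift)
          also have "\<dots> = traj node sel x0 \<omega> T"
          proof (rule run_cons[OF rs vp])
            show "set (map (\<lambda>j. \<omega> (T + j)) [0..<t - T]) \<subseteq> set_pmf N" using elim(1) by auto
            show "vst n ?O (traj node sel x0 \<omega> T)" using tin by blast
          qed (rule cz)
          finally have "traj node sel x0 \<omega> (T + (t - T)) = traj node sel x0 \<omega> T" .
          moreover have "T + (t - T) = t" using that by simp
          ultimately show ?thesis by simp
        qed
        have "\<forall>t\<ge>T. \<forall>j\<in>{1..n}. traj node sel x0 \<omega> t j = c"
        proof (intro allI impI ballI)
          fix t j assume "T \<le> t" "j \<in> {1..n}"
          then show "traj node sel x0 \<omega> t j = c" using stay[of t] c by simp
        qed
        then show ?case by blast
      qed
    qed
  qed
qed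

end
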